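(* Fix $k=1$ and $\epsilon$ with $0\le\epsilon\le1/2$, and assume $\sqrt n\le m^{\epsilon}$. Any deterministic coverage oracle that stores a datastructure of at most $b=nm^{1-2\epsilon}$ bits does not attain an approximation ratio of $O(n^{1/2-\delta})$ for any constant $\delta>0$.
   Context: A set system with $n$ items and $m$ sets is a pair $(\mathcal X,\mathcal I)$ with $\mathcal X=\{1,\dots,n\}$ and $\mathcal I$ an indexed family of $m$ subsets of $\mathcal X$. For $k\ge1$ and a query $Q\subseteq\mathcal X$, $OPT(k,\mathcal X,\mathcal I,Q)=\max\{|(\bigcup_{S\in\mathcal J}S)\cap Q| : \mathcal J\subseteq\mathcal I,|\mathcal J|\le k\}$. A deterministic coverage oracle consists of a deterministic static stage mapping $(n,m,k,(\mathcal X,\mathcal I))$ to a bit string $\mathcal D$ (the datastructure), and a deterministic dynamic stage mapping $(\mathcal D,Q)$, for $Q\subseteq\mathcal X$, to (indices of) $\mathcal J\subseteq\mathcal I$ with $|\mathcal J|\le k$, without access to $(\mathcal X,\mathcal I)$; $\mathcal A(k,\mathcal X,\mathcal I,Q)=|(\bigcup_{S\in\mathcal J}S)\cap Q|$. The approximation ratio is $\max OPT/\mathcal A$ over all set systems with $n$ items and $m$ sets and all queries $Q$. No computational restrictions are assumed. *)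

theory Defs
  imports Complex_Main
begin

definition valid_system :: "nat \<Rightarrow> nat \<Rightarrow> nat set list \<Rightarrow> bool" where
  "valid_system n m I \<longleftrightarrow> length I = m \<and> (\<forall>S\<in>set I. S \<subseteq> {1..n})"

definition coverage :: "nat set list \<Rightarrow> nat set \<Rightarrow> nat set \<Rightarrow> nat" where
  "coverage I J Q = card ((\<Union>j\<in>J. I ! j) \<inter> Q)"

definition OPT :: "nat \<Rightarrow> nat set list \<Rightarrow> nat set \<Rightarrow> nat" where
  "OPT k I Q = Max {coverage I J Q | J. J \<subseteq> {..<length I} \<and> card J \<le> k}"

text \<open>A deterministic coverage cov. data structure is a pair (static, dynamic):
  static n m k I is the datastructure (bit string); dynamic D Q returns indices J.
  The dynamic stage only sees D and Q.\<close>
definition well_formed_cov_ds ::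
  "nat \<Rightarrow> nat \<Rightarrow> nat \<Rightarrow> (nat \<Rightarrow> nat \<Rightarrow> nat \<Rightarrow> nat set list \<Rightarrow> bool list)
     \<Rightarrow> (bool list \<Rightarrow> nat set \<Rightarrow> nat set) \<Rightarrow> bool" where
  "well_formed_cov_ds n m k static dynamic \<longleftrightarrow>
     (\<forall>I Q. valid_system n m I \<longrightarrow> Q \<subseteq> {1..n} \<longrightarrow>
        dynamic (static n m k I) Q \<subseteq> {..<m} \<and> card (dynamic (static n m k I) Q) \<le> k)"

definition alg_value ::
  "nat \<Rightarrow> nat \<Rightarrow> nat \<Rightarrow> (nat \<Rightarrow> nat \<Rightarrow> nat \<Rightarrow> nat set list \<Rightarrow> bool list)
     \<Rightarrow> (bool list \<Rightarrow> nat set \<Rightarrow> nat set) \<Rightarrow> nat set list \<Rightarrow> nat set \<Rightarrow> nat" where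
  "alg_value n m k static dynamic I Q = coverage I (dynamic (static n m k I) Q) Q"

text \<open>The approximation ratio (max OPT/A over all instances) exceeds R, written without
  division: some instance has OPT > R * A (A = 0 < OPT counts as infinite ratio).\<close>
definition ratio_exceeds ::
  "nat \<Rightarrow> nat \<Rightarrow> nat \<Rightarrow> (nat \<Rightarrow> nat \<Rightarrow> nat \<Rightarrow> nat set list \<Rightarrow> bool list)
     \<Rightarrow> (bool list \<Rightarrow> nat set \<Rightarrow> nat set) \<Rightarrow> real \<Rightarrow> bool" where
  "ratio_exceeds n m k static dynamic R \<longleftrightarrow>
     (\<exists>I Q. valid_system n m I \<and> Q \<subseteq> {1..n} \<and>
        real (OPT k I Q) > R * real (alg_value n m k static dynamic I Q))"

end

theory Submission imports Defs "HOL-Computational_Algebra.Polynomial" "HOL-Computational_Algebra.Primes" "HOL-Combinatorics.Permutations"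
begin

lemma poly_roots_modp:
  fixes p :: int and q :: "int poly"
  assumes "prime p" "finite R" "\<forall>a\<in>R. \<forall>b\<in>R. a \<noteq> b \<longrightarrow> \<not> p dvd (a - b)"
    "\<forall>r\<in>R. p dvd poly q r" "degree q < card R"
  shows "\<exists>w. q = smult p w"
  using assms
proof (induction "degree q" arbitrary: q R)
  case 0
  then obtain r where r: "r \<in> R" by (metis card.empty less_nat_zero_code ex_in_conv)
  from "0.hyps" obtain c where qc: "q = [:c:]" by (metis degree_eq_zeroE)
  with 0 r have "p dvd c" by auto
  then obtain t where "c = p * t" by blast
  with qc show ?case by (intro exI[of _ "[:t:]"]) simp
next
  case (Suc k)
  then obtain a where a: "a \<in> R" by (metis card.empty less_nat_zero_code ex_in_conv)
  define q' where "q' = synthetic_div q a"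
  have qeq: "q = [:-a, 1:] * q' + [:poly q a:]" unfolding q'_def by (rule synthetic_div_correct'[symmetric])
  have dq': "k = degree q'" unfolding q'_def using Suc.hyps(2) by (simp add: degree_synthetic_div)
  have "\<forall>r\<in>R-{a}. p dvd poly q' r"
  proof
    fix r assume r: "r \<in> R - {a}"
    have "poly q r = (r - a) * poly q' r + poly q a" by (subst qeq) (simp add: algebra_simps)
    moreover have "p dvd poly q r" "p dvd poly q a" using Suc.prems r a by auto
    ultimately have "p dvd (r - a) * poly q' r" by (metis dvd_add_right_iff add.commute)
    moreover have "\<not> p dvd (r - a)" using Suc.prems(3) r a by auto
    ultimately show "p dvd poly q' r" using Suc.prems(1) prime_dvd_mult_iff by blast
  qed
  moreover have "degree q' < card (R - {a})" using Suc.prems(2,5) Suc.hyps(2) dq' a by simp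
  ultimately obtain w where w: "q' = smult p w"
    using Suc.hyps(1)[OF dq'] Suc.prems by (meson Diff_subset finite_Diff subsetD)
  from Suc.prems a obtain t where t: "poly q a = p * t" by blast
  have "q = [:-a, 1:] * smult p w + [:p * t:]" using qeq w t by simp
  also have "\<dots> = smult p ([:-a, 1:] * w + [:t:])" by (simp add: smult_add_right)
  finally have "q = smult p ([:-a, 1:] * w + [:t:])" .
  then show ?case by blast
qed

definition digit :: "nat \<Rightarrow> nat \<Rightarrow> nat \<Rightarrow> nat" where
  "digit p u i = u div p ^ i mod p"

definition Pv :: "nat \<Rightarrow> nat \<Rightarrow> nat \<Rightarrow> nat \<Rightarrow> nat" where
  "Pv p d u x = (\<Sum>i\<le>d. digit p u i * x ^ i)"

definition G :: "nat \<Rightarrow> nat \<Rightarrow> nat \<Rightarrow> nat set" where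
  "G p d u = (\<lambda>x. x * p + Pv p d u x mod p + 1) ` {..<p}"

lemma digits_mod:
  assumes "\<forall>i<k. digit p u i = digit p v i"
  shows "u mod p ^ k = v mod p ^ k"
  using assms
proof (induction k)
  case 0 then show ?case by simp
next
  case (Suc k)
  have "u mod p ^ Suc k = p ^ k * (u div p ^ k mod p) + u mod p ^ k"
    by (simp only: power_Suc2 mod_mult2_eq)
  moreover have "v mod p ^ Suc k = p ^ k * (v div p ^ k mod p) + v mod p ^ k"
    by (simp only: power_Suc2 mod_mult2_eq)
  ultimately show ?case using Suc by (simp add: digit_def)
qed

lemma G_sub:
  assumes "p > 0" shows "G p d u \<subseteq> {1..p^2}"
proof
  fix z assume "z \<in> G p d u"
  then obtain x where x: "x < p" "z = x * p + Pv p d u x mod p + 1" unfolding G_def by auto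
  have "Pv p d u x mod p < p" using assms by simp
  then have "z \<le> x * p + p" using x by linarith
  also have "\<dots> \<le> (p - 1) * p + p" using x by (intro add_right_mono mult_right_mono) auto
  also have "\<dots> = p ^ 2" using assms by (cases p) (auto simp: power2_eq_square)
  finally show "z \<in> {1..p^2}" using x by simp
qed

lemma G_inj:
  assumes "p > 0" shows "inj_on (\<lambda>x. x * p + Pv p d u x mod p + 1) {..<p}"
proof (rule inj_onI)
  fix x y assume "x * p + Pv p d u x mod p + 1 = y * p + Pv p d u y mod p + 1"
  then have "(x * p + Pv p d u x mod p) div p = (y * p + Pv p d u y mod p) div p" by simp
  then show "x = y" using assms by simp
qed

lemma G_card:
  assumes "p > 0" shows "card (G p d u) = p"
  unfolding G_def using card_image[OF G_inj[OF assms]] by simp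

lemma G_inter:
  assumes p: "prime p" and u: "u < p ^ (d+1)" and v: "v < p ^ (d+1)" and uv: "u \<noteq> v"
  shows "card (G p d u \<inter> G p d v) \<le> d"
proof (rule ccontr)
  assume "\<not> ?thesis"
  then have big: "d < card (G p d u \<inter> G p d v)" by simp
  have p0: "p > 0" using p prime_gt_0_nat by blast
  define R' where "R' = {x. x < p \<and> Pv p d u x mod p = Pv p d v x mod p}"
  have "G p d u \<inter> G p d v \<subseteq> (\<lambda>x. x * p + Pv p d u x mod p + 1) ` R'"
  proof
    fix z assume "z \<in> G p d u \<inter> G p d v"
    then obtain x y where xy: "x < p" "y < p" "z = x * p + Pv p d u x mod p + 1" "z = y * p + Pv p d v y mod p + 1"
      unfolding G_def by auto
    then have "(x * p + Pv p d u x mod p) div p = (y * p + Pv p d v y mod p) div p" by simp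
    then have "x = y" using p0 by simp
    with xy have "x \<in> R'" "z = x * p + Pv p d u x mod p + 1" unfolding R'_def by auto
    then show "z \<in> (\<lambda>x. x * p + Pv p d u x mod p + 1) ` R'" by blast
  qed
  moreover have finR': "finite R'" unfolding R'_def by simp
  ultimately have "card (G p d u \<inter> G p d v) \<le> card R'"
    using card_mono[OF finite_imageI[OF finR']] card_image_le[OF finR'] order_trans by blast
  with big have bigR: "d < card R'" by simp
  define R where "R = int ` R'"
  have cR: "card R = card R'" unfolding R_def by (simp add: card_image)
  define q :: "int poly" where "q = (\<Sum>i\<le>d. monom (int (digit p u i) - int (digit p v i)) i)"
  have degq: "degree q \<le> d" unfolding q_def
    by (intro degree_sum_le) (auto intro: order_trans[OF degree_monom_le])
  have polyq: "poly q (int x) = int (Pv p d u x) - int (Pv p d v x)" for x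
    unfolding q_def Pv_def by (simp add: poly_sum poly_monom sum_subtractf algebra_simps)
  have "\<forall>r\<in>R. int p dvd poly q r"
  proof
    fix r assume "r \<in> R"
    then obtain x where x: "x \<in> R'" "r = int x" unfolding R_def by auto
    then have "Pv p d u x mod p = Pv p d v x mod p" unfolding R'_def by simp
    then have "int (Pv p d u x) mod int p = int (Pv p d v x) mod int p"
      by (simp flip: of_nat_mod)
    then show "int p dvd poly q r" using x polyq by (simp add: mod_eq_dvd_iff)
  qed
  moreover have "\<forall>a\<in>R. \<forall>b\<in>R. a \<noteq> b \<longrightarrow> \<not> int p dvd (a - b)"
  proof (intro ballI impI)
    fix a b assume ab: "a \<in> R" "b \<in> R" "a \<noteq> b"
    then have "0 \<le> a" "a < int p" "0 \<le> b" "b < int p" unfolding R_def R'_def by auto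
    then have "\<bar>a - b\<bar> < int p" "a - b \<noteq> 0" using ab by auto
    then show "\<not> int p dvd (a - b)" using dvd_imp_le_int[of "a - b" "int p"] by auto
  qed
  moreover have "prime (int p)" using p by simp
  moreover have "finite R" unfolding R_def using finR' by simp
  moreover have "degree q < card R" using degq bigR cR by simp
  ultimately obtain w where w: "q = smult (int p) w" using poly_roots_modp by blast
  have "\<forall>i<d+1. digit p u i = digit p v i"
  proof (intro allI impI)
    fix i assume i: "i < d + 1"
    have "coeff q i = int (digit p u i) - int (digit p v i)" unfolding q_def using i
      by (simp add: coeff_sum coeff_monom)
    then have eq: "int (digit p u i) - int (digit p v i) = int p * coeff w i" using w by simp
    have "int p dvd (int (digit p u i) - int (digit p v i))" unfolding eq by simp
    moreover have "digit p u i < p" "digit p v i < p" using p0 by (auto simp: digit_def)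
    ultimately have "int (digit p u i) mod int p = int (digit p v i) mod int p"
      using mod_eq_dvd_iff by blast
    then have "digit p u i mod p = digit p v i mod p" by (simp flip: of_nat_mod)
    then show "digit p u i = digit p v i" using \<open>digit p u i < p\<close> \<open>digit p v i < p\<close> by simp
  qed
  then have "u mod p ^ (d+1) = v mod p ^ (d+1)" by (rule digits_mod)
  with u v uv show False by simp
qed

lemma sum_pow2_less: "(\<Sum>i\<le>m. (2::nat) ^ i) < 2 ^ Suc m"
  by (induction m) auto

lemma pow2_le_fact: "5 \<le> m \<Longrightarrow> (2::nat) ^ Suc m \<le> fact m"
proof (induction m rule: dec_induct)
  case base then show ?case by (simp add: fact_numeral)
next
  case (step k)
  have "(2::nat) ^ Suc (Suc k) = 2 * 2 ^ Suc k" by simp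
  also have "\<dots> \<le> 2 * fact k" using step by simp
  also have "\<dots> \<le> Suc k * fact k" using step by (intro mult_right_mono) auto
  also have "\<dots> = fact (Suc k)" by simp
  finally show ?case .
qed

lemma OPT_ge:
  assumes "j < length I" shows "coverage I {j} Q \<le> OPT 1 I Q"
proof -
  have "{coverage I J Q | J. J \<subseteq> {..<length I} \<and> card J \<le> 1} \<subseteq> (\<lambda>J. coverage I J Q) ` Pow {..<length I}"
    by auto
  then have fin: "finite {coverage I J Q | J. J \<subseteq> {..<length I} \<and> card J \<le> 1}"
    by (rule finite_subset) simp
  have "coverage I {j} Q \<in> {coverage I J Q | J. J \<subseteq> {..<length I} \<and> card J \<le> 1}"
    using assms by auto
  then show ?thesis unfolding OPT_def using fin by (rule Max_ge[rotated])
qed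

lemma core:
  fixes R :: real
  assumes p: "prime p" and d: "d \<ge> 1" and m: "m = p ^ (d+1)" and n: "n = p ^ 2" and m5: "5 \<le> m"
    and wf: "well_formed_cov_ds n m 1 static dynamic"
    and bitsm: "\<forall>I. valid_system n m I \<longrightarrow> length (static n m 1 I) \<le> m"
    and Rd: "max R 0 * real d < real p"
  shows "ratio_exceeds n m 1 static dynamic R"
proof (rule ccontr)
  assume nex: "\<not> ?thesis"
  have p0: "p > 0" using p prime_gt_0_nat by blast
  define Isys where "Isys \<sigma> = map (\<lambda>j. G p d (\<sigma> j)) [0..<m]" for \<sigma> :: "nat \<Rightarrow> nat"
  have valid: "valid_system n m (Isys \<sigma>)" for \<sigma>
    unfolding valid_system_def Isys_def using G_sub[OF p0] n by auto
  have key: "dynamic (static n m 1 (Isys \<sigma>)) (G p d (\<sigma> j)) = {j}"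
    if s: "\<sigma> permutes {..<m}" and j: "j < m" for \<sigma> j
  proof (rule ccontr)
    assume ne: "dynamic (static n m 1 (Isys \<sigma>)) (G p d (\<sigma> j)) \<noteq> {j}"
    define F where "F = dynamic (static n m 1 (Isys \<sigma>)) (G p d (\<sigma> j))"
    define Q where "Q = G p d (\<sigma> j)"
    have Qsub: "Q \<subseteq> {1..n}" unfolding Q_def using G_sub[OF p0] n by auto
    have F: "F \<subseteq> {..<m}" "card F \<le> 1" using wf valid[of \<sigma>] Qsub
      unfolding well_formed_cov_ds_def F_def Q_def by auto
    have lenI: "length (Isys \<sigma>) = m" unfolding Isys_def by simp
    have Inth: "Isys \<sigma> ! i = G p d (\<sigma> i)" if "i < m" for i unfolding Isys_def using that by simp
    have "coverage (Isys \<sigma>) {j} Q = p" unfolding coverage_def Q_def using Inth[OF j] G_card[OF p0] by simp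
    then have opt: "real p \<le> real (OPT 1 (Isys \<sigma>) Q)" using OPT_ge[of j "Isys \<sigma>" Q] lenI j by simp
    have sm: "\<sigma> i < m" if "i < m" for i using s that permutes_in_image by fastforce
    have A: "alg_value n m 1 static dynamic (Isys \<sigma>) Q \<le> d"
    proof -
      have fF: "finite F" using F(1) finite_subset by blast
      show ?thesis
      proof (cases "F = {}")
        case True then show ?thesis unfolding alg_value_def coverage_def F_def Q_def by simp
      next
        case False
        then have "card F > 0" using fF by (simp add: card_gt_0_iff)
        then have "card F = 1" using F(2) by linarith
        then obtain j' where j': "F = {j'}" by (rule card_1_singletonE)
        then have "j' \<noteq> j" "j' < m" using ne F(1) unfolding F_def by auto
        then have "\<sigma> j' \<noteq> \<sigma> j" using permutes_inj[OF s] by (simp add: inj_eq)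
        then have "card (G p d (\<sigma> j') \<inter> G p d (\<sigma> j)) \<le> d"
          using G_inter[OF p] sm[OF j] sm[OF \<open>j' < m\<close>] m by simp
        then show ?thesis unfolding alg_value_def coverage_def
          using j' Inth[OF \<open>j' < m\<close>] unfolding F_def Q_def by simp
      qed
    qed
    have "R * real (alg_value n m 1 static dynamic (Isys \<sigma>) Q) \<le> max R 0 * real d"
      using A by (intro order_trans[OF mult_right_mono[of R "max R 0"]] mult_left_mono) auto
    then have "real (OPT 1 (Isys \<sigma>) Q) > R * real (alg_value n m 1 static dynamic (Isys \<sigma>) Q)"
      using Rd opt by linarith
    then show False using nex valid[of \<sigma>] Qsub unfolding ratio_exceeds_def by blast
  qed
  have inj: "inj_on (\<lambda>\<sigma>. static n m 1 (Isys \<sigma>)) {\<sigma>. \<sigma> permutes {..<m}}"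
  proof (rule inj_onI)
    fix \<sigma> \<tau> assume s: "\<sigma> \<in> {\<sigma>. \<sigma> permutes {..<m}}" and t: "\<tau> \<in> {\<sigma>. \<sigma> permutes {..<m}}"
      and eq: "static n m 1 (Isys \<sigma>) = static n m 1 (Isys \<tau>)"
    show "\<sigma> = \<tau>"
    proof
      fix j show "\<sigma> j = \<tau> j"
      proof (cases "j < m")
        case True
        have "\<sigma> j \<in> {..<m}" using s True permutes_in_image by fastforce
        moreover have "\<tau> ` {..<m} = {..<m}" using t permutes_image by blast
        ultimately have "\<sigma> j \<in> \<tau> ` {..<m}" by simp
        then obtain j' where j': "j' < m" "\<tau> j' = \<sigma> j" by auto
        have "{j} = dynamic (static n m 1 (Isys \<sigma>)) (G p d (\<sigma> j))" using key[of \<sigma> j] s True by simp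
        also have "\<dots> = dynamic (static n m 1 (Isys \<tau>)) (G p d (\<tau> j'))" using eq j' by simp
        also have "\<dots> = {j'}" using key[of \<tau> j'] t j' by simp
        finally show ?thesis using j' by simp
      next
        case False
        then have "\<sigma> j = j" "\<tau> j = j" using permutes_not_in[of \<sigma> "{..<m}" j] permutes_not_in[of \<tau> "{..<m}" j] s t by auto
        then show ?thesis by simp
      qed
    qed
  qed
  have img: "(\<lambda>\<sigma>. static n m 1 (Isys \<sigma>)) ` {\<sigma>. \<sigma> permutes {..<m}} \<subseteq> {xs. set xs \<subseteq> UNIV \<and> length xs \<le> m}"
    using bitsm valid by auto
  have "fact m = card {\<sigma>. \<sigma> permutes {..<m}}" using card_permutations[of "{..<m}" m] by simp
  also have "\<dots> \<le> card {xs :: bool list. set xs \<subseteq> UNIV \<and> length xs \<le> m}"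
    using card_inj_on_le[OF inj img finite_lists_length_le[of "UNIV :: bool set" m]] by simp
  also have "\<dots> = (\<Sum>i\<le>m. 2 ^ i)" using card_lists_length_le[of "UNIV :: bool set" m] by simp
  finally have "fact m \<le> (\<Sum>i\<le>m. (2::nat) ^ i)" .
  with sum_pow2_less[of m] pow2_le_fact[OF m5] show False by simp
qed

theorem mainTheorem8:
  fixes \<epsilon> \<delta> :: real
    and static :: "nat \<Rightarrow> nat \<Rightarrow> nat \<Rightarrow> nat set list \<Rightarrow> bool list"
    and dynamic :: "bool list \<Rightarrow> nat set \<Rightarrow> nat set"
  assumes eps: "0 < \<epsilon>" "\<epsilon> \<le> 1/2"
    and delta: "\<delta> > 0"
    and orc: "\<forall>n m. sqrt (real n) \<le> real m powr \<epsilon> \<longrightarrow> well_formed_cov_ds n m 1 static dynamic"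
    and bits: "\<forall>n m I. sqrt (real n) \<le> real m powr \<epsilon> \<longrightarrow> valid_system n m I \<longrightarrow>
                 real (length (static n m 1 I)) \<le> real n * real m powr (1 - 2 * \<epsilon>)"
  shows "\<forall>C::real. \<forall>N0::nat. \<exists>n m. N0 \<le> n \<and> sqrt (real n) \<le> real m powr \<epsilon> \<and>
           ratio_exceeds n m 1 static dynamic (C * real n powr (1/2 - \<delta>))"
proof (intro allI)
  fix C :: real and N0 :: nat
  define d where "d = nat \<lceil>1/\<epsilon>\<rceil>"
  have "1/\<epsilon> \<ge> 2" using eps by (simp add: field_simps)
  then have dge: "real d \<ge> 1/\<epsilon>" "d \<ge> 1" unfolding d_def by linarith+
  have de: "real d * \<epsilon> \<ge> 1" using dge eps by (simp add: field_simps)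
  define X where "X = max C 0 * real d + 1"
  have X0: "X > 0" unfolding X_def by (intro add_nonneg_pos mult_nonneg_nonneg) auto
  define B where "B = max N0 5 + nat \<lceil>X powr (1/(2*\<delta>))\<rceil>"
  obtain p where p: "prime p" "p > B" using bigger_prime by blast
  have pN0: "N0 \<le> p" "5 \<le> p" using p unfolding B_def by auto
  have pX: "real p > X powr (1/(2*\<delta>))" using p unfolding B_def by linarith
  have p1: "real p \<ge> 1" using pN0 by simp
  define n where "n = p ^ 2"
  define m where "m = p ^ (d+1)"
  have rn: "real n = real p powr 2" unfolding n_def using p1 by (simp add: powr_realpow)
  have "real p powr real (d + 1) = real p ^ (d+1)" using p1 by (subst powr_realpow) auto
  then have rm: "real m = real p powr (real d + 1)" unfolding m_def by (simp add: add.commute)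
  have pd: "1 \<le> p ^ d" "1 \<le> p" using pN0 by simp_all
  have "p * 1 \<le> p * p ^ d" using pd by (intro mult_le_mono2)
  then have pm: "p \<le> m" unfolding m_def by simp
  have "p * 1 \<le> p * p" using pd by (intro mult_le_mono2)
  then have pn: "p \<le> n" unfolding n_def by (simp add: power2_eq_square)
  have nN0: "N0 \<le> n" using pn pN0 by linarith
  have m5: "5 \<le> m" using pm pN0 by linarith
  have sq: "sqrt (real n) \<le> real m powr \<epsilon>"
  proof -
    have "sqrt (real n) = real p" unfolding n_def by simp
    also have "\<dots> = real p powr 1" using p1 by simp
    also have "\<dots> \<le> real p powr ((real d + 1) * \<epsilon>)" using p1 de eps by (intro powr_mono) (auto simp: algebra_simps)
    also have "\<dots> = real m powr \<epsilon>" unfolding rm by (simp add: powr_powr)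
    finally show ?thesis .
  qed
  have wf: "well_formed_cov_ds n m 1 static dynamic" using orc sq by blast
  have nm: "real n * real m powr (1 - 2 * \<epsilon>) \<le> real m"
  proof -
    have "real m powr (1 - 2 * \<epsilon>) = real p powr ((real d + 1) * (1 - 2 * \<epsilon>))"
      unfolding rm by (rule powr_powr)
    then have "real n * real m powr (1 - 2 * \<epsilon>) = real p powr 2 * real p powr ((real d + 1) * (1 - 2 * \<epsilon>))"
      unfolding rn by simp
    also have "\<dots> = real p powr (2 + (real d + 1) * (1 - 2 * \<epsilon>))" by (rule powr_add[symmetric])
    also have "\<dots> \<le> real p powr (real d + 1)" using p1 de eps by (intro powr_mono) (auto simp: algebra_simps)
    finally show ?thesis using rm by simp
  qed
  have bitsm: "\<forall>I. valid_system n m I \<longrightarrow> length (static n m 1 I) \<le> m"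
  proof (intro allI impI)
    fix I assume "valid_system n m I"
    then have "real (length (static n m 1 I)) \<le> real m" using bits sq nm by (meson order_trans)
    then show "length (static n m 1 I) \<le> m" by simp
  qed
  define R where "R = C * real n powr (1/2 - \<delta>)"
  have "real n powr (1/2 - \<delta>) = real p powr (2 * (1/2 - \<delta>))" unfolding rn by (rule powr_powr)
  then have Rp: "real n powr (1/2 - \<delta>) = real p powr (1 - 2*\<delta>)" by (simp add: algebra_simps)
  have ppos: "real p powr (1 - 2*\<delta>) > 0" using p1 by simp
  have XP: "X \<le> real p powr (2*\<delta>)"
  proof -
    have "X = (X powr (1/(2*\<delta>))) powr (2*\<delta>)" using X0 delta by (simp add: powr_powr)
    also have "\<dots> \<le> real p powr (2*\<delta>)" using pX delta by (intro powr_mono2) auto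
    finally show ?thesis .
  qed
  have "max R 0 * real d \<le> max C 0 * real d * real p powr (1 - 2*\<delta>)"
  proof (cases "C \<ge> 0")
    case True
    then have "R \<ge> 0" unfolding R_def Rp using ppos by simp
    then show ?thesis using True unfolding R_def Rp by (simp add: mult_ac)
  next
    case False
    then have "R \<le> 0" unfolding R_def Rp using ppos by (simp add: mult_nonpos_nonneg)
    then show ?thesis using False by simp
  qed
  also have "\<dots> < X * real p powr (1 - 2*\<delta>)" unfolding X_def using ppos by (simp add: algebra_simps)
  also have "\<dots> \<le> real p powr (2*\<delta>) * real p powr (1 - 2*\<delta>)" using XP ppos by simp
  also have "\<dots> = real p" using p1 by (simp flip: powr_add)
  finally have Rd: "max R 0 * real d < real p" .
  have "ratio_exceeds n m 1 static dynamic R"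
    using core[OF p(1) dge(2) m_def n_def m5 wf bitsm Rd] .
  then show "\<exists>n m. N0 \<le> n \<and> sqrt (real n) \<le> real m powr \<epsilon> \<and>
           ratio_exceeds n m 1 static dynamic (C * real n powr (1/2 - \<delta>))"
    using nN0 sq unfolding R_def by blast
qed

end
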